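(* Let $g_1,g_2$ be holomorphic functions on a domain $\mathcal{D}\subset\mathbb{C}$ with $g_1'g_2'\neq0$, let $\sqrt{g_1'g_2'}$ be a holomorphic branch, let $\Phi=\bigl(\tfrac{\mathrm{i}}{2}\tfrac{g_1g_2+1}{\sqrt{g_1'g_2'}},\ \tfrac12\tfrac{g_1g_2-1}{\sqrt{g_1'g_2'}},\ \tfrac12\tfrac{g_1+g_2}{\sqrt{g_1'g_2'}},\ \tfrac{\mathrm{i}}{2}\tfrac{g_1-g_2}{\sqrt{g_1'g_2'}}\bigr)$, let $\Psi$ be holomorphic on $\mathcal{D}$ with $\Psi'=\Phi$, and let $\mathcal{M}$ be the minimal surface $\mathrm{x}(u,v)=\operatorname{Re}\Psi(u+\mathrm{i}v)$ in $\mathbb{R}^4$. Then its first fundamental form is $E(du^2+dv^2)$ with $$E=\frac{(|g_1|^2+1)(|g_2|^2+1)}{4|g_1'g_2'|},$$ and its Gauss curvature $K$ and normal curvature $\varkappa$ are $$K=\frac{-8|g_1'g_2'|}{(|g_1|^2+1)(|g_2|^2+1)}\left(\frac{|g_1'|^2}{(|g_1|^2+1)^2}+\frac{|g_2'|^2}{(|g_2|^2+1)^2}\right),$$ $$\varkappa=\frac{8|g_1'g_2'|}{(|g_1|^2+1)(|g_2|^2+1)}\left(\frac{|g_1'|^2}{(|g_1|^2+1)^2}-\frac{|g_2'|^2}{(|g_2|^2+1)^2}\right).$$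
   Context: The normal curvature is defined as follows: let $X_1=\mathrm{x}_u/\|\mathrm{x}_u\|$, $X_2=\mathrm{x}_v/\|\mathrm{x}_v\|$, and let $n_1,n_2$ be orthonormal normal vector fields such that $(X_1,X_2,n_1,n_2)$ is a positively oriented orthonormal basis of $\mathbb{R}^4$ (standard orientation); with $A_n$ the Weingarten operator, $\varkappa=A_{n_1}X_1\cdot A_{n_2}X_2-A_{n_2}X_1\cdot A_{n_1}X_2$. *)

theory Defs
  imports "HOL-Analysis.Analysis"
begin

text \<open>A parametrised surface is a map x from (an open subset of) the complex plane,
  identified with the (u,v)-plane via z = u + i v, into R^4.\<close>

definition pdu :: "(complex \<Rightarrow> real^4) \<Rightarrow> complex \<Rightarrow> real^4" where
  "pdu f z = frechet_derivative f (at z) 1"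

definition pdv :: "(complex \<Rightarrow> real^4) \<Rightarrow> complex \<Rightarrow> real^4" where
  "pdv f z = frechet_derivative f (at z) \<i>"

definition fff_E :: "(complex \<Rightarrow> real^4) \<Rightarrow> complex \<Rightarrow> real" where
  "fff_E x z = pdu x z \<bullet> pdu x z"
definition fff_F :: "(complex \<Rightarrow> real^4) \<Rightarrow> complex \<Rightarrow> real" where
  "fff_F x z = pdu x z \<bullet> pdv x z"
definition fff_G :: "(complex \<Rightarrow> real^4) \<Rightarrow> complex \<Rightarrow> real" where
  "fff_G x z = pdv x z \<bullet> pdv x z"

definition tan_proj :: "(complex \<Rightarrow> real^4) \<Rightarrow> complex \<Rightarrow> real^4 \<Rightarrow> real^4" where
  "tan_proj x z w =
     (let E = fff_E x z; F = fff_F x z; G = fff_G x z;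
          a = w \<bullet> pdu x z; b = w \<bullet> pdv x z
      in ((G * a - F * b) / (E * G - F\<^sup>2)) *\<^sub>R pdu x z
         + ((E * b - F * a) / (E * G - F\<^sup>2)) *\<^sub>R pdv x z)"

definition nor_proj :: "(complex \<Rightarrow> real^4) \<Rightarrow> complex \<Rightarrow> real^4 \<Rightarrow> real^4" where
  "nor_proj x z w = w - tan_proj x z w"

text \<open>Gauss curvature via the second fundamental form (Gauss equation):
  K = (<sigma(x_u,x_u), sigma(x_v,x_v)> - |sigma(x_u,x_v)|^2) / (EG - F^2).\<close>
definition gauss_curvature :: "(complex \<Rightarrow> real^4) \<Rightarrow> complex \<Rightarrow> real" where
  "gauss_curvature x z =
     (nor_proj x z (pdu (pdu x) z) \<bullet> nor_proj x z (pdv (pdv x) z)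
      - nor_proj x z (pdv (pdu x) z) \<bullet> nor_proj x z (pdv (pdu x) z))
     / (fff_E x z * fff_G x z - (fff_F x z)\<^sup>2)"

definition unitX1 :: "(complex \<Rightarrow> real^4) \<Rightarrow> complex \<Rightarrow> real^4" where
  "unitX1 x z = (1 / norm (pdu x z)) *\<^sub>R pdu x z"
definition unitX2 :: "(complex \<Rightarrow> real^4) \<Rightarrow> complex \<Rightarrow> real^4" where
  "unitX2 x z = (1 / norm (pdv x z)) *\<^sub>R pdv x z"

text \<open>Weingarten operator A_n applied to X1 and X2:
  A_n X = - (D_X n)^T (tangential part of the derivative of the normal field n
  in direction X), where D_{X1} n = n_u/|x_u| and D_{X2} n = n_v/|x_v|.\<close>
definition weingarten_X1 :: "(complex \<Rightarrow> real^4) \<Rightarrow> (complex \<Rightarrow> real^4) \<Rightarrow> complex \<Rightarrow> real^4" where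
  "weingarten_X1 x n z = - tan_proj x z ((1 / norm (pdu x z)) *\<^sub>R pdu n z)"
definition weingarten_X2 :: "(complex \<Rightarrow> real^4) \<Rightarrow> (complex \<Rightarrow> real^4) \<Rightarrow> complex \<Rightarrow> real^4" where
  "weingarten_X2 x n z = - tan_proj x z ((1 / norm (pdv x z)) *\<^sub>R pdv n z)"

definition normal_curvature ::
  "(complex \<Rightarrow> real^4) \<Rightarrow> (complex \<Rightarrow> real^4) \<Rightarrow> (complex \<Rightarrow> real^4) \<Rightarrow> complex \<Rightarrow> real" where
  "normal_curvature x n1 n2 z =
     weingarten_X1 x n1 z \<bullet> weingarten_X2 x n2 z - weingarten_X1 x n2 z \<bullet> weingarten_X2 x n1 z"

definition pos_oriented :: "real^4 \<Rightarrow> real^4 \<Rightarrow> real^4 \<Rightarrow> real^4 \<Rightarrow> bool" where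
  "pos_oriented a b c d \<longleftrightarrow> det (vector [a, b, c, d] :: real^4^4) > 0"

definition orthonormal4 :: "real^4 \<Rightarrow> real^4 \<Rightarrow> real^4 \<Rightarrow> real^4 \<Rightarrow> bool" where
  "orthonormal4 a b c d \<longleftrightarrow>
     (\<forall>p\<in>{(a,a),(b,b),(c,c),(d,d)}. fst p \<bullet> snd p = 1) \<and>
     (\<forall>p\<in>{(a,b),(a,c),(a,d),(b,c),(b,d),(c,d)}. fst p \<bullet> snd p = 0)"

end

theory Submission
  imports Defs
begin


lemma  det_4:
  "det (A::'a::comm_ring_1^4^4) = A$1$1 * A$2$2 * A$3$3 * A$4$4 - A$1$1 * A$2$2 * A$3$4 * A$4$3 - A$1$1 * A$2$3 * A$3$2 * A$4$4 + A$1$1 * A$2$3 * A$3$4 * A$4$2 + A$1$1 * A$2$4 * A$3$2 * A$4$3 - A$1$1 * A$2$4 * A$3$3 * A$4$2 - A$1$2 * A$2$1 * A$3$3 * A$4$4 + A$1$2 * A$2$1 * A$3$4 * A$4$3 + A$1$2 * A$2$3 * A$3$1 * A$4$4 - A$1$2 * A$2$3 * A$3$4 * A$4$1 - A$1$2 * A$2$4 * A$3$1 * A$4$3 + A$1$2 * A$2$4 * A$3$3 * A$4$1 + A$1$3 * A$2$1 * A$3$2 * A$4$4 - A$1$3 * A$2$1 * A$3$4 * A$4$2 - A$1$3 * A$2$2 * A$3$1 * A$4$4 + A$1$3 * A$2$2 * A$3$4 * A$4$1 + A$1$3 * A$2$4 * A$3$1 * A$4$2 - A$1$3 * A$2$4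 * A$3$2 * A$4$1 - A$1$4 * A$2$1 * A$3$2 * A$4$3 + A$1$4 * A$2$1 * A$3$3 * A$4$2 + A$1$4 * A$2$2 * A$3$1 * A$4$3 - A$1$4 * A$2$2 * A$3$3 * A$4$1 - A$1$4 * A$2$3 * A$3$1 * A$4$2 + A$1$4 * A$2$3 * A$3$2 * A$4$1"
proof -
  have f1: "finite {2::4, 3, 4}" "1 \<notin> {2::4, 3,4}"
    by auto
  have f123: "finite {3::4, 4}" "2 \<notin> {3::4, 4}"
    by auto
  have f23: "finite {4::4}" "3 \<notin> {4::4}"
    by auto
  show ?thesis
    unfolding det_def UNIV_4
    unfolding sum_over_permutations_insert[OF f1]
    unfolding sum_over_permutations_insert[OF f123]
    unfolding sum_over_permutations_insert[OF f23]
    unfolding permutes_sing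
    by (simp add: sign_swap_id permutation_swap_id sign_compose permutation_compose sign_id swap_id_eq algebra_simps)
qed

lemma vector_4 [simp]: "(vector [a,b,c,d] :: 'a::zero^4) $ 1 = a"
 "(vector [a,b,c,d] :: 'a::zero^4) $ 2 = b" "(vector [a,b,c,d] :: 'a::zero^4) $ 3 = c"
 "(vector [a,b,c,d] :: 'a::zero^4) $ 4 = d"
  unfolding vector_def by simp_all

definition re4 :: "complex^4 \<Rightarrow> real^4" where "re4 u = (\<chi> k. Re (u$k))"
definition cnj4 :: "complex^4 \<Rightarrow> complex^4" where "cnj4 u = (\<chi> k. cnj (u$k))"
definition bf :: "complex^4 \<Rightarrow> complex^4 \<Rightarrow> complex" where "bf u w = (\<Sum>k\<in>UNIV. u$k * w$k)"
definition hf :: "complex^4 \<Rightarrow> complex^4 \<Rightarrow> complex" where "hf u w = (\<Sum>k\<in>UNIV. u$k * cnj (w$k))"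
definition VV :: "complex \<Rightarrow> complex \<Rightarrow> complex^4" where
 "VV A B = vector [ (\<i>/2) * (A * B + 1), (1/2) * (A * B - 1), (1/2) * (A + B), (\<i>/2) * (A - B) ]"
definition VD :: "complex \<Rightarrow> complex \<Rightarrow> complex \<Rightarrow> complex \<Rightarrow> complex^4" where
 "VD A B a b = vector [ (\<i>/2) * (a * B + A * b), (1/2) * (a * B + A * b), (1/2) * (a + b), (\<i>/2) * (a - b) ]"

lemma re4_comp [simp]: "re4 u $ k = Re (u$k)" by (simp add: re4_def)
lemma cnj4_comp [simp]: "cnj4 u $ k = cnj (u$k)" by (simp add: cnj4_def)

lemma dot_re4: "re4 u \<bullet> re4 w = (Re (bf u w) + Re (hf u w)) / 2"
  by (simp add: inner_vec_def bf_def hf_def sum_4 field_simps)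

lemma bf_smult_left [simp]: "bf (c *s u) w = c * bf u w"
  by (simp add: bf_def sum_distrib_left mult.assoc)
lemma bf_smult_right [simp]: "bf u (c *s w) = c * bf u w"
  by (simp add: bf_def sum_distrib_left mult.left_commute)
lemma hf_smult_left [simp]: "hf (c *s u) w = c * hf u w"
  by (simp add: hf_def sum_distrib_left mult.assoc)
lemma hf_smult_right [simp]: "hf u (c *s w) = cnj c * hf u w"
  by (simp add: hf_def sum_distrib_left mult.left_commute)
lemma bf_diff_left [simp]: "bf (u - v) w = bf u w - bf v w"
  by (simp add: bf_def sum_subtractf algebra_simps)
lemma bf_diff_right [simp]: "bf w (u - v) = bf w u - bf w v"
  by (simp add: bf_def sum_subtractf algebra_simps)
lemma hf_diff_left [simp]: "hf (u - v) w = hf u w - hf v w"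
  by (simp add: hf_def sum_subtractf algebra_simps)
lemma hf_diff_right [simp]: "hf w (u - v) = hf w u - hf w v"
  by (simp add: hf_def sum_subtractf algebra_simps)
lemma bf_sym: "bf u w = bf w u"
  by (simp add: bf_def mult.commute)
lemma hf_cnj: "cnj (hf u w) = hf w u"
  by (simp add: hf_def mult.commute)
lemma hf_self_real: "cnj (hf u u) = hf u u"
  by (simp add: hf_cnj)

lemma re4_diff: "re4 (u - w) = re4 u - re4 w"
  by (simp add: vec_eq_iff)
lemma re4_smult: "re4 (c *s u) = Re c *\<^sub>R re4 u + Im c *\<^sub>R re4 (\<i> *s u)"
  by (simp add: vec_eq_iff)
lemma re4_uminus [simp]: "re4 (- u) = - re4 u"
  by (simp add: vec_eq_iff)
lemma re4_ii: "re4 (\<i> *s (\<i> *s u)) = - re4 u"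
  by (simp add: vec_eq_iff)
lemma cnj4_smult: "cnj4 (c *s u) = cnj c *s cnj4 u"
  by (simp add: vec_eq_iff)

lemma hd_re4:
  assumes "\<And>k. ((\<lambda>w. f w $ k) has_field_derivative (f' $ k)) (at z)"
  shows "((\<lambda>w. re4 (f w)) has_derivative (\<lambda>h. re4 (h *s f'))) (at z)"
proof -
  have "((\<lambda>w. re4 (f w)) has_derivative (\<lambda>h. re4 (h *s f'))) (at z within UNIV)"
  proof (subst has_derivative_componentwise_within, intro ballI)
    fix i :: "real^4" assume "i \<in> Basis"
    then obtain k where i: "i = axis k 1" by (auto simp: Basis_vec_def)
    have "((\<lambda>w. Re (f w $ k)) has_derivative (\<lambda>h. Re (f' $ k * h))) (at z)"
      using has_derivative_Re[OF assms[of k, unfolded has_field_derivative_def]] .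
    then show "((\<lambda>w. re4 (f w) \<bullet> i) has_derivative (\<lambda>h. re4 (h *s f') \<bullet> i)) (at z within UNIV)"
      by (simp add: i inner_axis mult.commute)
  qed
  then show ?thesis by simp
qed

lemma bfVV: "bf (VV A B) (VV A B) = 0"
  by (simp add: bf_def VV_def sum_4 field_simps complex_i_mult_minus)
lemma bfVD: "bf (VD A B a b) (VV A B) = 0"
  by (simp add: bf_def VV_def VD_def sum_4 field_simps complex_i_mult_minus)
lemma hfVV: "hf (VV A B) (VV A B) * 2 = (A * cnj A + 1) * (B * cnj B + 1)"
  by (simp add: hf_def VV_def sum_4 field_simps complex_i_mult_minus)
lemma hfVD: "hf (VD A B a b) (VV A B) * 2 = (a * cnj A * (B * cnj B + 1) + b * cnj B * (A * cnj A + 1))"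
  by (simp add: hf_def VV_def VD_def sum_4 field_simps complex_i_mult_minus)
lemma hfDD: "hf (VD A B a b) (VD A B a b) * 2 = (a * cnj a * (B * cnj B + 1) + b * cnj b * (A * cnj A + 1) + a * cnj b * cnj A * B + cnj a * b * A * cnj B)"
  by (simp add: hf_def VV_def VD_def sum_4 field_simps complex_i_mult_minus)
lemma detV: "det (vector [VV A B, cnj4 (VV A B), VD A B a b, cnj4 (VD A B a b)] :: complex^4^4) * 4
   = - (a * cnj a * (B * cnj B + 1)^2 - b * cnj b * (A * cnj A + 1)^2)"
  by (simp add: det_4 cnj4_def VV_def VD_def field_simps complex_i_mult_minus power2_eq_square)

lemma det_re_aux: "complex_of_real (det (vector [R, I, R', I'] :: real^4^4)) =
   - (1/4) * det (vector [(\<chi> k. Complex (R$k) (I$k)), (\<chi> k. Complex (R$k) (- I$k)), (\<chi> k. Complex (R'$k) (I'$k)), (\<chi> k. Complex (R'$k) (- I'$k))] :: complex^4^4)"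
  apply (simp add: det_4 Complex_eq)
  using complex_i_mult_minus[of 1] by algebra

lemma det_neg24: "det (vector [a, - b, c, - d] :: real^4^4) = det (vector [a, b, c, d] :: real^4^4)"
  by (simp add: det_4)

lemma det_re4: "complex_of_real (det (vector [re4 u, re4 (\<i> *s u), re4 w, re4 (\<i> *s w)] :: real^4^4))
   = - (1/4) * det (vector [u, cnj4 u, w, cnj4 w])"
proof -
  define I where "I = (\<chi> k. Im (u$k))"
  define I' where "I' = (\<chi> k. Im (w$k))"
  have 1: "re4 (\<i> *s u) = - I" "re4 (\<i> *s w) = - I'" by (simp_all add: vec_eq_iff I_def I'_def)
  have 2: "(\<chi> k. Complex (re4 u$k) (I$k)) = u" "(\<chi> k. Complex (re4 w$k) (I'$k)) = w"
     "(\<chi> k. Complex (re4 u$k) (- I$k)) = cnj4 u" "(\<chi> k. Complex (re4 w$k) (- I'$k)) = cnj4 w"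
    by (simp_all add: vec_eq_iff I_def I'_def complex_eq_iff)
  show ?thesis
    unfolding 1 det_neg24 det_re_aux 2 ..
qed


lemma tan_proj_simp:
  assumes "fff_F x z = 0" "fff_G x z = fff_E x z" "fff_E x z \<noteq> 0"
  shows "tan_proj x z w = ((w \<bullet> pdu x z) / fff_E x z) *\<^sub>R pdu x z + ((w \<bullet> pdv x z) / fff_E x z) *\<^sub>R pdv x z"
  using assms by (simp add: tan_proj_def Let_def power2_eq_square)

lemma nor_dot:
  assumes "fff_F x z = 0" "fff_G x z = fff_E x z" "fff_E x z \<noteq> 0"
  shows "nor_proj x z u \<bullet> nor_proj x z w = u \<bullet> w - (u \<bullet> pdu x z) * (w \<bullet> pdu x z) / fff_E x z
           - (u \<bullet> pdv x z) * (w \<bullet> pdv x z) / fff_E x z"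
proof -
  define p1 where "p1 = pdu x z"
  define p2 where "p2 = pdv x z"
  define E where "E = fff_E x z"
  have h: "p1 \<bullet> p1 = E" "p2 \<bullet> p2 = E" "p1 \<bullet> p2 = 0" "p2 \<bullet> p1 = 0" "E \<noteq> 0"
    using assms by (auto simp: p1_def p2_def E_def fff_E_def fff_F_def fff_G_def inner_commute)
  show ?thesis
    unfolding nor_proj_def tan_proj_simp[OF assms] p1_def[symmetric] p2_def[symmetric] E_def[symmetric]
    using h by (simp add: inner_diff_left inner_diff_right inner_add_left inner_add_right inner_commute field_simps power2_eq_square)
qed

lemma ncurv:
  assumes F: "fff_F x z = 0" "fff_G x z = fff_E x z" "fff_E x z > 0"
    and h1: "pdu n1 z \<bullet> pdu x z = - a1" "pdu n1 z \<bullet> pdv x z = - b1"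
            "pdv n1 z \<bullet> pdu x z = - b1" "pdv n1 z \<bullet> pdv x z = a1"
    and h2: "pdu n2 z \<bullet> pdu x z = - a2" "pdu n2 z \<bullet> pdv x z = - b2"
            "pdv n2 z \<bullet> pdu x z = - b2" "pdv n2 z \<bullet> pdv x z = a2"
  shows "normal_curvature x n1 n2 z = 2 / (fff_E x z)^2 * (a1 * b2 - b1 * a2)"
proof -
  define p1 where "p1 = pdu x z"
  define p2 where "p2 = pdv x z"
  define E where "E = fff_E x z"
  have h: "p1 \<bullet> p1 = E" "p2 \<bullet> p2 = E" "p1 \<bullet> p2 = 0" "p2 \<bullet> p1 = 0" "E > 0"
    using F by (auto simp: p1_def p2_def E_def fff_E_def fff_F_def fff_G_def inner_commute)
  have n: "norm p1 = sqrt E" "norm p2 = sqrt E"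
    using h by (simp_all add: norm_eq_sqrt_inner)
  have sq: "sqrt E * sqrt E = E" using h by simp
  have ne: "F \<noteq> 0" if "F = fff_E x z" for F using F that by simp
  show ?thesis
    unfolding normal_curvature_def weingarten_X1_def weingarten_X2_def tan_proj_simp[OF F(1,2) ne[OF refl]]
      p1_def[symmetric] p2_def[symmetric] E_def[symmetric] n
    using h h1 h2 sq unfolding p1_def[symmetric] p2_def[symmetric]
    by (simp add: inner_add_left inner_add_right inner_diff_left inner_diff_right inner_commute field_simps power2_eq_square)
qed

lemma unit_orth:
  assumes "((1 / norm v) *\<^sub>R v) \<bullet> ((1 / norm v) *\<^sub>R v) = 1" "((1 / norm v) *\<^sub>R v) \<bullet> n = 0"
  shows "v \<bullet> n = 0"
proof -
  have "v \<noteq> 0" using assms(1) by auto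
  then show ?thesis using assms(2) by simp
qed

lemma mult_transpose_entry: "((A::real^4^4) ** transpose B) $ i $ j = A $ i \<bullet> B $ j"
  by (simp add: matrix_matrix_mult_def transpose_def inner_vec_def mult.commute)

lemma det_frame:
  assumes o: "orthonormal4 e1 e2 e3 e4" and p: "pos_oriented e1 e2 e3 e4"
  shows "(e3 \<bullet> u) * (e4 \<bullet> v) - (e3 \<bullet> v) * (e4 \<bullet> u) = det (vector [e1, e2, u, v] :: real^4^4)"
proof -
  define M where "M = (vector [e1, e2, e3, e4] :: real^4^4)"
  define N where "N = (vector [e1, e2, u, v] :: real^4^4)"
  have oo: "e1 \<bullet> e1 = 1" "e2 \<bullet> e2 = 1" "e3 \<bullet> e3 = 1" "e4 \<bullet> e4 = 1"
     "e1 \<bullet> e2 = 0" "e1 \<bullet> e3 = 0" "e1 \<bullet> e4 = 0" "e2 \<bullet> e3 = 0" "e2 \<bullet> e4 = 0" "e3 \<bullet> e4 = 0"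
    using o by (auto simp: orthonormal4_def)
  have oo2: "e2 \<bullet> e1 = 0" "e3 \<bullet> e1 = 0" "e4 \<bullet> e1 = 0" "e3 \<bullet> e2 = 0" "e4 \<bullet> e2 = 0" "e4 \<bullet> e3 = 0"
    using oo by (simp_all add: inner_commute)
  have "det (M ** transpose M) = 1"
    unfolding det_4 mult_transpose_entry M_def using oo oo2 by simp
  then have "det M * det M = 1" by (simp add: det_mul)
  moreover have "det M > 0" using p by (simp add: pos_oriented_def M_def)
  ultimately have dM: "det M = 1"
  proof -
    have "(det M)^2 = 1" using \<open>det M * det M = 1\<close> by (simp add: power2_eq_square)
    then have "\<bar>det M\<bar> = 1" by (simp add: abs_square_eq_1)
    then show ?thesis using \<open>det M > 0\<close> by simp
  qed
  have "det (M ** transpose N) = (e3 \<bullet> u) * (e4 \<bullet> v) - (e3 \<bullet> v) * (e4 \<bullet> u)"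
    unfolding det_4 mult_transpose_entry M_def N_def using oo oo2 by (simp add: algebra_simps)
  then show ?thesis using dM by (simp add: det_mul N_def)
qed

lemma det_scale12: "det (vector [c1 *\<^sub>R a, c2 *\<^sub>R b, u, v] :: real^4^4) = c1 * c2 * det (vector [a, b, u, v] :: real^4^4)"
  by (simp add: det_4 algebra_simps)

lemma det_shift: "det (vector [a, b, u - (x1 *\<^sub>R a + y1 *\<^sub>R b), v - (x2 *\<^sub>R a + y2 *\<^sub>R b)] :: real^4^4) = det (vector [a, b, u, v] :: real^4^4)"
  by (simp add: det_4 algebra_simps)

lemma det_cscale: "det (vector [k1 *s a, k2 *s b, k3 *s u, k4 *s v] :: complex^4^4) = k1 * k2 * k3 * k4 * det (vector [a, b, u, v] :: complex^4^4)"
  by (simp add: det_4 algebra_simps)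


lemma normal_derivs:
  assumes D: "open D" "z \<in> D" and nd: "n differentiable (at z)"
    and o1: "\<forall>w\<in>D. n w \<bullet> pdu x w = 0" and o2: "\<forall>w\<in>D. n w \<bullet> pdv x w = 0"
    and du: "(pdu x has_derivative (\<lambda>h. re4 (h *s P'))) (at z)"
    and dv: "(pdv x has_derivative (\<lambda>h. re4 (h *s (\<i> *s P')))) (at z)"
  shows "pdu n z \<bullet> pdu x z = - (n z \<bullet> re4 P')" "pdu n z \<bullet> pdv x z = - (n z \<bullet> re4 (\<i> *s P'))"
        "pdv n z \<bullet> pdu x z = - (n z \<bullet> re4 (\<i> *s P'))" "pdv n z \<bullet> pdv x z = n z \<bullet> re4 P'"
proof -
  define n' where "n' = frechet_derivative n (at z)"
  have nd': "(n has_derivative n') (at z)" using nd by (simp add: n'_def frechet_derivative_works)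
  have a1: "((\<lambda>w. n w \<bullet> pdu x w) has_derivative (\<lambda>h. n z \<bullet> re4 (h *s P') + n' h \<bullet> pdu x z)) (at z)"
    using has_derivative_inner[OF nd' du] .
  have a2: "((\<lambda>w. n w \<bullet> pdv x w) has_derivative (\<lambda>h. n z \<bullet> re4 (h *s (\<i> *s P')) + n' h \<bullet> pdv x z)) (at z)"
    using has_derivative_inner[OF nd' dv] .
  have b1: "((\<lambda>w. n w \<bullet> pdu x w) has_derivative (\<lambda>h. 0)) (at z)"
    by (rule has_derivative_transform_within_open[OF has_derivative_const D]) (use o1 in auto)
  have b2: "((\<lambda>w. n w \<bullet> pdv x w) has_derivative (\<lambda>h. 0)) (at z)"
    by (rule has_derivative_transform_within_open[OF has_derivative_const D]) (use o2 in auto)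
  have e1: "(\<lambda>h. n z \<bullet> re4 (h *s P') + n' h \<bullet> pdu x z) = (\<lambda>h. 0)"
    using has_derivative_unique[OF a1 b1] .
  have e2: "(\<lambda>h. n z \<bullet> re4 (h *s (\<i> *s P')) + n' h \<bullet> pdv x z) = (\<lambda>h. 0)"
    using has_derivative_unique[OF a2 b2] .
  have u: "pdu n z = n' 1" "pdv n z = n' \<i>" by (simp_all add: pdu_def pdv_def n'_def)
  from fun_cong[OF e1, of 1] show "pdu n z \<bullet> pdu x z = - (n z \<bullet> re4 P')"
    by (simp add: u algebra_simps)
  from fun_cong[OF e1, of \<i>] show "pdv n z \<bullet> pdu x z = - (n z \<bullet> re4 (\<i> *s P'))"
    by (simp add: u algebra_simps)
  from fun_cong[OF e2, of 1] show "pdu n z \<bullet> pdv x z = - (n z \<bullet> re4 (\<i> *s P'))"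
    by (simp add: u algebra_simps)
  from fun_cong[OF e2, of \<i>] show "pdv n z \<bullet> pdv x z = n z \<bullet> re4 P'"
    by (simp add: u algebra_simps re4_ii)
qed

lemma key_ring:
  fixes X Y Yc m0 k kc c cc :: complex
  shows "(k*kc*X - cc*(k*kc*Y) - c*(k*kc*Yc) + c*cc*(k*kc*m0)) * (k*kc*m0)
     - (k*kc*Y - c*(k*kc*m0)) * (kc*k*Yc - cc*(kc*k*m0)) = (k*kc)^2 * (X*m0 - Y*Yc)"
  by (simp add: algebra_simps power2_eq_square)

lemma poly_key:
  fixes A B a b X Y m0 :: complex
  assumes "X * 2 = (a * cnj a * (B * cnj B + 1) + b * cnj b * (A * cnj A + 1) + a * cnj b * cnj A * B + cnj a * b * A * cnj B)"
    "Y * 2 = (a * cnj A * (B * cnj B + 1) + b * cnj B * (A * cnj A + 1))"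
    "m0 * 2 = (A * cnj A + 1) * (B * cnj B + 1)"
  shows "(X * m0 - Y * cnj Y) * 4 = a * cnj a * (B * cnj B + 1)^2 + b * cnj b * (A * cnj A + 1)^2"
proof -
  have c: "cnj Y * 2 = (cnj a * A * (cnj B * B + 1) + cnj b * B * (cnj A * A + 1))"
    using arg_cong[OF assms(2), of cnj] by simp
  have "(X * m0 - Y * cnj Y) * 4 = (X*2)*(m0*2) - (Y*2)*(cnj Y * 2)" by (simp add: algebra_simps)
  also have "\<dots> = a * cnj a * (B * cnj B + 1)^2 + b * cnj b * (A * cnj A + 1)^2"
    unfolding assms(1,3) assms(2) c by (simp add: algebra_simps power2_eq_square)
  finally show ?thesis .
qed


theorem mainTheorem5:
  fixes D :: "complex set"
    and g1 g2 s :: "complex \<Rightarrow> complex"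
    and \<Phi> \<Psi> :: "complex \<Rightarrow> complex^4"
    and x :: "complex \<Rightarrow> real^4"
  assumes "open D" and "connected D"
    and "g1 holomorphic_on D" and "g2 holomorphic_on D"
    and "\<forall>z\<in>D. deriv g1 z * deriv g2 z \<noteq> 0"
    and "s holomorphic_on D"
    and "\<forall>z\<in>D. (s z)\<^sup>2 = deriv g1 z * deriv g2 z"
    and "\<forall>z. \<Phi> z = vector
           [ (\<i>/2) * (g1 z * g2 z + 1) / s z,
             (1/2) * (g1 z * g2 z - 1) / s z,
             (1/2) * (g1 z + g2 z) / s z,
             (\<i>/2) * (g1 z - g2 z) / s z ]"
    and "\<forall>z\<in>D. \<forall>k. ((\<lambda>w. \<Psi> w $ k) has_field_derivative (\<Phi> z $ k)) (at z)"
    and "\<forall>z. x z = (\<chi> k. Re (\<Psi> z $ k))"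
  shows "(\<forall>z\<in>D.
           fff_E x z = (cmod (g1 z)^2 + 1) * (cmod (g2 z)^2 + 1)
                       / (4 * cmod (deriv g1 z * deriv g2 z))
         \<and> fff_F x z = 0
         \<and> fff_G x z = fff_E x z
         \<and> gauss_curvature x z =
             (- 8 * cmod (deriv g1 z * deriv g2 z))
               / ((cmod (g1 z)^2 + 1) * (cmod (g2 z)^2 + 1))
             * (cmod (deriv g1 z)^2 / (cmod (g1 z)^2 + 1)^2
                + cmod (deriv g2 z)^2 / (cmod (g2 z)^2 + 1)^2))
         \<and> (\<forall>n1 n2 :: complex \<Rightarrow> real^4.
           (\<forall>w\<in>D. n1 differentiable (at w) \<and> n2 differentiable (at w)) \<and>
           (\<forall>w\<in>D. orthonormal4 (unitX1 x w) (unitX2 x w) (n1 w) (n2 w)) \<and>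
           (\<forall>w\<in>D. pos_oriented (unitX1 x w) (unitX2 x w) (n1 w) (n2 w))
           \<longrightarrow> (\<forall>z\<in>D. normal_curvature x n1 n2 z =
                 8 * cmod (deriv g1 z * deriv g2 z)
                   / ((cmod (g1 z)^2 + 1) * (cmod (g2 z)^2 + 1))
                 * (cmod (deriv g1 z)^2 / (cmod (g1 z)^2 + 1)^2
                    - cmod (deriv g2 z)^2 / (cmod (g2 z)^2 + 1)^2)))"
proof -
  have sD: "s w \<noteq> 0" if "w \<in> D" for w
  proof
    assume "s w = 0"
    then have "deriv g1 w * deriv g2 w = 0" using assms(7) that by (metis power2_eq_square mult_zero_left)
    then show False using assms(5) that by blast
  qed
  have Phi_eq: "\<Phi> w = (1 / s w) *s VV (g1 w) (g2 w)" for w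
    using assms(8) by (simp add: vec_eq_iff forall_4 VV_def)
  have x_eq: "x = (\<lambda>w. re4 (\<Psi> w))" using assms(10) by (auto simp: re4_def)
  have xder: "(x has_derivative (\<lambda>h. re4 (h *s \<Phi> w))) (at w)" if "w \<in> D" for w
    unfolding x_eq by (rule hd_re4) (use assms(9) that in auto)
  have pdu_x: "pdu x w = re4 (\<Phi> w)" if "w \<in> D" for w
  proof -
    have "frechet_derivative x (at w) = (\<lambda>h. re4 (h *s \<Phi> w))"
      using frechet_derivative_at[OF xder[OF that]] by simp
    then show ?thesis by (simp add: pdu_def)
  qed
  have pdv_x: "pdv x w = re4 (\<i> *s \<Phi> w)" if "w \<in> D" for w
  proof -
    have "frechet_derivative x (at w) = (\<lambda>h. re4 (h *s \<Phi> w))"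
      using frechet_derivative_at[OF xder[OF that]] by simp
    then show ?thesis by (simp add: pdv_def)
  qed
  have main: "fff_E x z = (cmod (g1 z)^2 + 1) * (cmod (g2 z)^2 + 1)
                       / (4 * cmod (deriv g1 z * deriv g2 z))
         \<and> fff_F x z = 0
         \<and> fff_G x z = fff_E x z
         \<and> gauss_curvature x z =
             (- 8 * cmod (deriv g1 z * deriv g2 z))
               / ((cmod (g1 z)^2 + 1) * (cmod (g2 z)^2 + 1))
             * (cmod (deriv g1 z)^2 / (cmod (g1 z)^2 + 1)^2
                + cmod (deriv g2 z)^2 / (cmod (g2 z)^2 + 1)^2)
         \<and> (\<forall>n1 n2 :: complex \<Rightarrow> real^4.
           (\<forall>w\<in>D. n1 differentiable (at w) \<and> n2 differentiable (at w)) \<and>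
           (\<forall>w\<in>D. orthonormal4 (unitX1 x w) (unitX2 x w) (n1 w) (n2 w)) \<and>
           (\<forall>w\<in>D. pos_oriented (unitX1 x w) (unitX2 x w) (n1 w) (n2 w))
           \<longrightarrow> normal_curvature x n1 n2 z =
                 8 * cmod (deriv g1 z * deriv g2 z)
                   / ((cmod (g1 z)^2 + 1) * (cmod (g2 z)^2 + 1))
                 * (cmod (deriv g1 z)^2 / (cmod (g1 z)^2 + 1)^2
                    - cmod (deriv g2 z)^2 / (cmod (g2 z)^2 + 1)^2))"
    if z: "z \<in> D" for z
  proof -
    define A where "A = g1 z"
    define B where "B = g2 z"
    define a where "a = deriv g1 z"
    define b where "b = deriv g2 z"
    define sz where "sz = s z"
    define s' where "s' = deriv s z"
    define V where "V = VV A B"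
    define V' where "V' = VD A B a b"
    define P where "P = (1 / sz) *s V"
    define W where "W = (1 / sz) *s V'"
    define c where "c = s' / sz"
    define P' where "P' = W - c *s P"
    have szne: "sz \<noteq> 0" using sD[OF z] by (simp add: sz_def)
    have PhiP: "\<Phi> z = P" by (simp add: Phi_eq P_def V_def A_def B_def sz_def)
    have g1d: "(g1 has_field_derivative a) (at z)" using holomorphic_derivI[OF assms(3,1) z] by (simp add: a_def)
    have g2d: "(g2 has_field_derivative b) (at z)" using holomorphic_derivI[OF assms(4,1) z] by (simp add: b_def)
    have sd: "(s has_field_derivative s') (at z)" using holomorphic_derivI[OF assms(6,1) z] by (simp add: s'_def)
    have VVd: "((\<lambda>w. VV (g1 w) (g2 w) $ k) has_field_derivative V' $ k) (at z)" for k
    proof -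
      have "k = 1 \<or> k = 2 \<or> k = 3 \<or> k = 4" by (rule exhaust_4)
      then show ?thesis
        by (elim disjE) (auto simp: VV_def VD_def V'_def A_def B_def intro!: derivative_eq_intros g1d g2d)
    qed
    have Phider: "((\<lambda>w. \<Phi> w $ k) has_field_derivative P' $ k) (at z)" for k
    proof -
      have eq: "(\<lambda>w. \<Phi> w $ k) = (\<lambda>w. VV (g1 w) (g2 w) $ k / s w)"
        by (rule ext) (simp add: Phi_eq)
      have "((\<lambda>w. VV (g1 w) (g2 w) $ k / s w) has_field_derivative
              (V' $ k * s z - VV (g1 z) (g2 z) $ k * s') / (s z * s z)) (at z)"
        using DERIV_divide[OF VVd sd] szne by (simp add: sz_def)
      moreover have "(V' $ k * s z - VV (g1 z) (g2 z) $ k * s') / (s z * s z) = P' $ k"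
        using szne by (simp add: P'_def W_def P_def c_def V_def A_def B_def sz_def[symmetric] field_simps)
      ultimately show ?thesis by (simp add: eq)
    qed
    have pdux_der: "(pdu x has_derivative (\<lambda>h. re4 (h *s P'))) (at z)"
    proof -
      have "((\<lambda>w. re4 (\<Phi> w)) has_derivative (\<lambda>h. re4 (h *s P'))) (at z)"
        by (rule hd_re4) (rule Phider)
      then show ?thesis
        by (rule has_derivative_transform_within_open[OF _ assms(1) z]) (simp add: pdu_x)
    qed
    have pdvx_der: "(pdv x has_derivative (\<lambda>h. re4 (h *s (\<i> *s P')))) (at z)"
    proof -
      have "((\<lambda>w. re4 (\<i> *s \<Phi> w)) has_derivative (\<lambda>h. re4 (h *s (\<i> *s P')))) (at z)"
        by (rule hd_re4) (simp add: DERIV_cmult[OF Phider])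
      then show ?thesis
        by (rule has_derivative_transform_within_open[OF _ assms(1) z]) (simp add: pdv_x)
    qed
    have d2: "pdu (pdu x) z = re4 P'" "pdv (pdu x) z = re4 (\<i> *s P')" "pdv (pdv x) z = - re4 P'"
    proof -
      have "frechet_derivative (pdu x) (at z) = (\<lambda>h. re4 (h *s P'))"
        using frechet_derivative_at[OF pdux_der] by simp
      then show "pdu (pdu x) z = re4 P'" "pdv (pdu x) z = re4 (\<i> *s P')"
        by (simp_all add: pdu_def pdv_def)
      have "frechet_derivative (pdv x) (at z) = (\<lambda>h. re4 (h *s (\<i> *s P')))"
        using frechet_derivative_at[OF pdvx_der] by simp
      then show "pdv (pdv x) z = - re4 P'"
        by (simp add: pdv_def re4_ii)
    qed
    have d1: "pdu x z = re4 P" "pdv x z = re4 (\<i> *s P)"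
      using pdu_x[OF z] pdv_x[OF z] PhiP by simp_all
    define S where "S = cmod sz ^ 2"
    define PA where "PA = cmod A ^ 2 + 1"
    define PB where "PB = cmod B ^ 2 + 1"
    define na where "na = cmod a ^ 2"
    define nb where "nb = cmod b ^ 2"
    have Spos: "S > 0" using szne by (simp add: S_def)
    have PApos: "PA > 0" "PB > 0" by (simp_all add: PA_def PB_def add_nonneg_pos)
    have Sab: "cmod (deriv g1 z * deriv g2 z) = S"
    proof -
      have "sz ^ 2 = a * b" using assms(7) z by (simp add: sz_def a_def b_def)
      then show ?thesis by (metis S_def a_def b_def norm_power)
    qed
    have AA: "A * cnj A = of_real (cmod A ^ 2)" "B * cnj B = of_real (cmod B ^ 2)"
       "a * cnj a = of_real na" "b * cnj b = of_real nb" "sz * cnj sz = of_real S"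
      by (simp_all only: PA_def PB_def na_def nb_def S_def complex_norm_square)
    have hVV: "hf V V = of_real (PA * PB / 2)"
    proof -
      have "hf V V * 2 = of_real (PA * PB)"
        using hfVV[of A B] unfolding V_def AA by (simp add: PA_def PB_def)
      then show ?thesis by (simp add: field_simps)
    qed
    have pk: "(hf V' V' * hf V V - hf V' V * cnj (hf V' V)) * 4 = of_real (na * PB^2 + nb * PA^2)"
      using poly_key[OF hfDD hfVD hfVV, where A=A and B=B and a=a and b=b] unfolding V_def V'_def AA
      by (simp add: PA_def PB_def)
    have kk: "(1 / sz) * cnj (1 / sz) = of_real (1 / S)"
      using AA(5) szne by (simp add: field_simps)
    have hPP: "hf P P = of_real (PA * PB / (2 * S))"
    proof -
      have "hf P P = ((1 / sz) * cnj (1 / sz)) * hf V V" by (simp add: P_def)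
      then show ?thesis unfolding kk hVV by simp
    qed
    have bVD': "bf V V' = 0" by (subst bf_sym) (simp add: V_def V'_def bfVD)
    have bPP: "bf P P = 0" by (simp add: P_def V_def bfVV)
    have bP'P: "bf P' P = 0" "bf P P' = 0"
      by (simp_all add: P'_def W_def P_def V_def V'_def bfVV bfVD bVD'[unfolded V_def V'_def])
    have Ev: "fff_E x z = PA * PB / (4 * S)"
      by (simp add: fff_E_def d1 dot_re4 bPP hPP)
    have Fv: "fff_F x z = 0"
      by (simp add: fff_F_def d1 dot_re4 bPP hPP)
    have Gv: "fff_G x z = fff_E x z"
      by (simp add: fff_G_def fff_E_def d1 dot_re4 bPP hPP)
    have Epos: "fff_E x z > 0" using Ev Spos PApos by simp
    have Ene: "fff_E x z \<noteq> 0" using Epos by simp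
    define h where "h = hf P' P"
    define w' where "w' = hf P' P'"
    have hc: "hf P P' = cnj h" by (simp add: h_def hf_cnj)
    have wreal: "Im w' = 0" using hf_self_real[of P'] by (simp add: w'_def complex_eq_iff)
    have K: "gauss_curvature x z = - (Re w' - (Re h ^ 2 + Im h ^ 2) / (2 * fff_E x z)) / (fff_E x z)^2"
      unfolding gauss_curvature_def nor_dot[OF Fv Gv Ene] d1 d2 Fv Gv
      using Ene by (simp add: dot_re4 bP'P hc h_def[symmetric] w'_def[symmetric] field_simps power2_eq_square)
    have key: "w' * hf P P - h * cnj h = of_real ((na * PB^2 + nb * PA^2) / (4 * S^2))"
    proof -
      define X where "X = hf W W"
      define Y where "Y = hf W P"
      define m where "m = hf P P"
      have mr: "cnj m = m" by (simp add: m_def hf_self_real)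
      have Yc: "hf P W = cnj Y" by (simp add: Y_def hf_cnj)
      have w'e: "w' = X - cnj c * Y - c * cnj Y + c * cnj c * m"
        by (simp add: w'_def P'_def X_def Y_def m_def Yc algebra_simps)
      have he: "h = Y - c * m" by (simp add: h_def P'_def Y_def m_def)
      have "w' * m - h * cnj h = X * m - Y * cnj Y"
        unfolding w'e he using mr by (simp add: algebra_simps)
      also have "\<dots> = ((1 / sz) * cnj (1 / sz))^2 * (hf V' V' * hf V V - hf V' V * cnj (hf V' V))"
        by (simp add: X_def Y_def m_def W_def P_def power2_eq_square algebra_simps)
      also have "\<dots> = of_real ((na * PB^2 + nb * PA^2) / (4 * S^2))"
      proof -
        have e: "hf V' V' * hf V V - hf V' V * cnj (hf V' V) = of_real (na * PB^2 + nb * PA^2) / 4"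
          using pk by (simp add: field_simps)
        show ?thesis unfolding kk e using Spos by (simp add: field_simps)
      qed
      finally show ?thesis by (simp add: m_def)
    qed
    have rk: "Re w' * (PA * PB / (2 * S)) - (Re h ^ 2 + Im h ^ 2) = (na * PB^2 + nb * PA^2) / (4 * S^2)"
    proof -
      have "Re (w' * hf P P - h * cnj h) = Re w' * (PA * PB / (2 * S)) - (Re h ^ 2 + Im h ^ 2)"
        by (simp add: hPP complex_mult_cnj)
      then show ?thesis using key by simp
    qed
    have rr: "cmod (g1 z)^2 + 1 = PA" "cmod (g2 z)^2 + 1 = PB" "cmod (deriv g1 z)^2 = na" "cmod (deriv g2 z)^2 = nb"
      by (simp_all add: PA_def PB_def na_def nb_def A_def B_def a_def b_def)
    have gauss: "gauss_curvature x z =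
             (- 8 * cmod (deriv g1 z * deriv g2 z))
               / ((cmod (g1 z)^2 + 1) * (cmod (g2 z)^2 + 1))
             * (cmod (deriv g1 z)^2 / (cmod (g1 z)^2 + 1)^2
                + cmod (deriv g2 z)^2 / (cmod (g2 z)^2 + 1)^2)"
    proof -
      have r2: "Re h ^ 2 + Im h ^ 2 = Re w' * (PA * PB / (2 * S)) - (na * PB^2 + nb * PA^2) / (4 * S^2)"
        using rk by simp
      have "gauss_curvature x z = - (8 * S * (na * PB^2 + nb * PA^2)) / (PA^3 * PB^3)"
        unfolding K r2 Ev using Spos PApos by (simp add: field_simps power2_eq_square power3_eq_cube)
      then show ?thesis
        unfolding Sab rr using PApos by (simp add: field_simps power2_eq_square power3_eq_cube)
    qed
    have E_ok: "fff_E x z = (cmod (g1 z)^2 + 1) * (cmod (g2 z)^2 + 1) / (4 * cmod (deriv g1 z * deriv g2 z))"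
      unfolding Sab Ev by (simp add: PA_def PB_def A_def B_def)
    have nc: "normal_curvature x n1 n2 z =
                 8 * cmod (deriv g1 z * deriv g2 z)
                   / ((cmod (g1 z)^2 + 1) * (cmod (g2 z)^2 + 1))
                 * (cmod (deriv g1 z)^2 / (cmod (g1 z)^2 + 1)^2
                    - cmod (deriv g2 z)^2 / (cmod (g2 z)^2 + 1)^2)"
      if H: "\<forall>w\<in>D. n1 differentiable (at w) \<and> n2 differentiable (at w)"
         "\<forall>w\<in>D. orthonormal4 (unitX1 x w) (unitX2 x w) (n1 w) (n2 w)"
         "\<forall>w\<in>D. pos_oriented (unitX1 x w) (unitX2 x w) (n1 w) (n2 w)"
      for n1 n2 :: "complex \<Rightarrow> real^4"
    proof -
      have orth: "n1 w \<bullet> pdu x w = 0 \<and> n1 w \<bullet> pdv x w = 0 \<and> n2 w \<bullet> pdu x w = 0 \<and> n2 w \<bullet> pdv x w = 0"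
        if "w \<in> D" for w
      proof -
        have o: "orthonormal4 (unitX1 x w) (unitX2 x w) (n1 w) (n2 w)" using H(2) that by blast
        then have "unitX1 x w \<bullet> unitX1 x w = 1" "unitX2 x w \<bullet> unitX2 x w = 1"
          "unitX1 x w \<bullet> n1 w = 0" "unitX1 x w \<bullet> n2 w = 0" "unitX2 x w \<bullet> n1 w = 0" "unitX2 x w \<bullet> n2 w = 0"
          by (auto simp: orthonormal4_def)
        then show ?thesis unfolding unitX1_def unitX2_def
          by (auto dest: unit_orth simp: inner_commute)
      qed
      have n1d: "n1 differentiable (at z)" "n2 differentiable (at z)" using H(1) z by auto
      have o1: "\<forall>w\<in>D. n1 w \<bullet> pdu x w = 0" "\<forall>w\<in>D. n1 w \<bullet> pdv x w = 0"
        "\<forall>w\<in>D. n2 w \<bullet> pdu x w = 0" "\<forall>w\<in>D. n2 w \<bullet> pdv x w = 0" using orth by auto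
      note N1 = normal_derivs[OF assms(1) z n1d(1) o1(1) o1(2) pdux_der pdvx_der]
      note N2 = normal_derivs[OF assms(1) z n1d(2) o1(3) o1(4) pdux_der pdvx_der]
      have ncv: "normal_curvature x n1 n2 z = 2 / (fff_E x z)^2 *
          ((n1 z \<bullet> re4 P') * (n2 z \<bullet> re4 (\<i> *s P')) - (n1 z \<bullet> re4 (\<i> *s P')) * (n2 z \<bullet> re4 P'))"
        by (rule ncurv[OF Fv Gv Epos N1 N2])
      have df: "(n1 z \<bullet> re4 P') * (n2 z \<bullet> re4 (\<i> *s P')) - (n1 z \<bullet> re4 (\<i> *s P')) * (n2 z \<bullet> re4 P')
          = det (vector [unitX1 x z, unitX2 x z, re4 P', re4 (\<i> *s P')] :: real^4^4)"
        by (rule det_frame) (use H(2,3) z in auto)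
      have nrm: "norm (re4 P) = sqrt (fff_E x z)" "norm (re4 (\<i> *s P)) = sqrt (fff_E x z)"
        using Gv by (simp_all add: fff_E_def fff_G_def d1 norm_eq_sqrt_inner)
      have sqE: "sqrt (fff_E x z) * sqrt (fff_E x z) = fff_E x z" using Epos by simp
      have dX: "det (vector [unitX1 x z, unitX2 x z, re4 P', re4 (\<i> *s P')] :: real^4^4)
          = det (vector [re4 P, re4 (\<i> *s P), re4 P', re4 (\<i> *s P')] :: real^4^4) / fff_E x z"
        unfolding unitX1_def unitX2_def d1 det_scale12 nrm using Epos sqE by (simp add: field_simps)
      have Q1: "re4 P' = re4 W - (Re c *\<^sub>R re4 P + Im c *\<^sub>R re4 (\<i> *s P))"
        unfolding P'_def re4_diff re4_smult[of c P] ..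
      have Q2: "re4 (\<i> *s P') = re4 (\<i> *s W) - (Re (\<i> * c) *\<^sub>R re4 P + Im (\<i> * c) *\<^sub>R re4 (\<i> *s P))"
      proof -
        have e: "\<i> *s P' = \<i> *s W - (\<i> * c) *s P" by (simp add: P'_def vector_ssub_ldistrib vector_smult_assoc)
        show ?thesis unfolding e re4_diff re4_smult[of "\<i> * c" P] ..
      qed
      have dshift: "det (vector [re4 P, re4 (\<i> *s P), re4 P', re4 (\<i> *s P')] :: real^4^4)
          = det (vector [re4 P, re4 (\<i> *s P), re4 W, re4 (\<i> *s W)] :: real^4^4)"
        unfolding Q1 Q2 by (rule det_shift)
      have dv: "det (vector [V, cnj4 V, V', cnj4 V'] :: complex^4^4) = - of_real (na * PB^2 - nb * PA^2) / 4"
        using detV[of A B a b] unfolding V_def[symmetric] V'_def[symmetric] AA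
        by (simp add: PA_def PB_def field_simps)
      have dval: "det (vector [re4 P, re4 (\<i> *s P), re4 W, re4 (\<i> *s W)] :: real^4^4) = (na * PB^2 - nb * PA^2) / (16 * S^2)"
      proof -
        have "complex_of_real (det (vector [re4 P, re4 (\<i> *s P), re4 W, re4 (\<i> *s W)] :: real^4^4))
            = - (1/4) * det (vector [P, cnj4 P, W, cnj4 W])" by (rule det_re4)
        also have "\<dots> = - (1/4) * (((1/sz) * cnj (1/sz))^2 * det (vector [V, cnj4 V, V', cnj4 V'] :: complex^4^4))"
          unfolding P_def W_def cnj4_smult det_cscale by (simp add: power2_eq_square algebra_simps)
        also have "\<dots> = of_real ((na * PB^2 - nb * PA^2) / (16 * S^2))"
          unfolding kk dv using Spos by (simp add: field_simps)
        finally show ?thesis by (simp only: of_real_eq_iff)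
      qed
      have "normal_curvature x n1 n2 z = 8 * S * (na * PB^2 - nb * PA^2) / (PA^3 * PB^3)"
        unfolding ncv df dX dshift dval Ev using Spos PApos by (simp add: field_simps power2_eq_square power3_eq_cube)
      then show ?thesis
        unfolding Sab rr using PApos by (simp add: field_simps power2_eq_square power3_eq_cube)
    qed
    show ?thesis using E_ok Fv Gv gauss nc by blast
  qed
  show ?thesis using main by blast
qed
end
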